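(* Let $T$ be a tree. Then $\gamma_{rdR}(T)=\gamma(T)+\gamma_r(T)$ if and only if $T$ is a star (i.e., $T\cong K_{1,m}$ for some $m\ge 0$, with $K_{1,0}=K_1$).
   Context: All graphs are finite and simple. An RDRD function of $G$ is a function $f:V(G)\to\{0,1,2,3\}$ such that every vertex with value $0$ has at least two neighbors with value $2$ or at least one neighbor with value $3$, every vertex with value $1$ has a neighbor with value $2$ or $3$, and the subgraph induced by the vertices with value $0$ has no isolated vertices; $\gamma_{rdR}(G)$ is the minimum of $\sum_v f(v)$ over RDRD functions. $\gamma(G)$ is the domination number; $\gamma_r(G)$ is the minimum cardinality of a set $S$ such that every vertex outside $S$ has a neighbor in $S$ and a neighbor outside $S$. *)

theory Defs
  imports Main
begin

definition simple_graph :: "'a set \<Rightarrow> ('a \<Rightarrow> 'a \<Rightarrow> bool) \<Rightarrow> bool" where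
  "simple_graph V E \<longleftrightarrow> finite V \<and> (\<forall>u v. E u v \<longrightarrow> E v u)
     \<and> (\<forall>v. \<not> E v v) \<and> (\<forall>u v. E u v \<longrightarrow> u \<in> V \<and> v \<in> V)"

definition is_walk :: "('a \<Rightarrow> 'a \<Rightarrow> bool) \<Rightarrow> 'a list \<Rightarrow> bool" where
  "is_walk E p \<longleftrightarrow> p \<noteq> [] \<and> (\<forall>i. Suc i < length p \<longrightarrow> E (p ! i) (p ! Suc i))"

definition connected_graph :: "'a set \<Rightarrow> ('a \<Rightarrow> 'a \<Rightarrow> bool) \<Rightarrow> bool" where
  "connected_graph V E \<longleftrightarrow> V \<noteq> {} \<and>
     (\<forall>u\<in>V. \<forall>v\<in>V. \<exists>p. is_walk E p \<and> hd p = u \<and> last p = v)"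

definition has_cycle :: "('a \<Rightarrow> 'a \<Rightarrow> bool) \<Rightarrow> bool" where
  "has_cycle E \<longleftrightarrow> (\<exists>p. length p \<ge> 3 \<and> distinct p \<and> is_walk E p \<and> E (last p) (hd p))"

definition is_tree :: "'a set \<Rightarrow> ('a \<Rightarrow> 'a \<Rightarrow> bool) \<Rightarrow> bool" where
  "is_tree V E \<longleftrightarrow> simple_graph V E \<and> connected_graph V E \<and> \<not> has_cycle E"

definition is_star :: "'a set \<Rightarrow> ('a \<Rightarrow> 'a \<Rightarrow> bool) \<Rightarrow> bool" where
  "is_star V E \<longleftrightarrow> (\<exists>c\<in>V. (\<forall>v\<in>V. v \<noteq> c \<longrightarrow> E c v) \<and> (\<forall>u v. E u v \<longrightarrow> u = c \<or> v = c))"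

definition dominating_set :: "'a set \<Rightarrow> ('a \<Rightarrow> 'a \<Rightarrow> bool) \<Rightarrow> 'a set \<Rightarrow> bool" where
  "dominating_set V E S \<longleftrightarrow> S \<subseteq> V \<and> (\<forall>v\<in>V - S. \<exists>u\<in>S. E v u)"

definition domination_number :: "'a set \<Rightarrow> ('a \<Rightarrow> 'a \<Rightarrow> bool) \<Rightarrow> nat" where
  "domination_number V E = (LEAST k. \<exists>S. dominating_set V E S \<and> card S = k)"

definition restrained_dominating_set :: "'a set \<Rightarrow> ('a \<Rightarrow> 'a \<Rightarrow> bool) \<Rightarrow> 'a set \<Rightarrow> bool" where
  "restrained_dominating_set V E S \<longleftrightarrow> S \<subseteq> V \<and>
     (\<forall>v\<in>V - S. (\<exists>u\<in>S. E v u) \<and> (\<exists>u\<in>V - S. E v u))"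

definition restrained_domination_number :: "'a set \<Rightarrow> ('a \<Rightarrow> 'a \<Rightarrow> bool) \<Rightarrow> nat" where
  "restrained_domination_number V E =
     (LEAST k. \<exists>S. restrained_dominating_set V E S \<and> card S = k)"

text \<open>Restrained double Roman dominating (RDRD) function; only its values on V matter.\<close>
definition rdrd_function :: "'a set \<Rightarrow> ('a \<Rightarrow> 'a \<Rightarrow> bool) \<Rightarrow> ('a \<Rightarrow> nat) \<Rightarrow> bool" where
  "rdrd_function V E f \<longleftrightarrow>
     (\<forall>v\<in>V. f v \<le> 3) \<and>
     (\<forall>v\<in>V. f v = 0 \<longrightarrow>
        ((\<exists>u1\<in>V. \<exists>u2\<in>V. u1 \<noteq> u2 \<and> E v u1 \<and> E v u2 \<and> f u1 = 2 \<and> f u2 = 2)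
         \<or> (\<exists>u\<in>V. E v u \<and> f u = 3))) \<and>
     (\<forall>v\<in>V. f v = 1 \<longrightarrow> (\<exists>u\<in>V. E v u \<and> f u \<ge> 2)) \<and>
     (\<forall>v\<in>V. f v = 0 \<longrightarrow> (\<exists>u\<in>V. E v u \<and> f u = 0))"

definition rdrd_number :: "'a set \<Rightarrow> ('a \<Rightarrow> 'a \<Rightarrow> bool) \<Rightarrow> nat" where
  "rdrd_number V E = (LEAST k. \<exists>f. rdrd_function V E f \<and> sum f V = k)"

end

theory Submission
  imports Defs
begin

lemma dom_le: "dominating_set V E S \<Longrightarrow> domination_number V E \<le> card S"
  unfolding domination_number_def by (rule Least_le) blast

lemma rdom_le: assumes "restrained_dominating_set V E S" shows "restrained_domination_number V E \<le> card S"
  unfolding restrained_domination_number_def by (rule Least_le) (use assms in auto)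

lemma sg_fin: "simple_graph V E \<Longrightarrow> finite V" unfolding simple_graph_def by blast
lemma sg_sym: "simple_graph V E \<Longrightarrow> E u v \<Longrightarrow> E v u" unfolding simple_graph_def by blast
lemma sg_irr: "simple_graph V E \<Longrightarrow> \<not> E v v" unfolding simple_graph_def by blast
lemma sg_V1: "simple_graph V E \<Longrightarrow> E u v \<Longrightarrow> u \<in> V" unfolding simple_graph_def by blast
lemma sg_V2: "simple_graph V E \<Longrightarrow> E u v \<Longrightarrow> v \<in> V" unfolding simple_graph_def by blast

lemma zero_nb2:
  assumes "rdrd_function V E f" "v \<in> V" "f v = 0"
  shows "\<exists>w\<in>V. E v w \<and> 2 \<le> f w"
proof -
  have "(\<exists>u1\<in>V. \<exists>u2\<in>V. u1 \<noteq> u2 \<and> E v u1 \<and> E v u2 \<and> f u1 = 2 \<and> f u2 = 2)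
         \<or> (\<exists>u\<in>V. E v u \<and> f u = 3)" using assms unfolding rdrd_function_def by blast
  then show ?thesis by auto
qed

lemma zero_nb0:
  assumes "rdrd_function V E f" "v \<in> V" "f v = 0"
  shows "\<exists>w\<in>V. E v w \<and> f w = 0"
  using assms unfolding rdrd_function_def by blast

lemma one_nb:
  assumes "rdrd_function V E f" "v \<in> V" "f v = 1"
  shows "\<exists>w\<in>V. E v w \<and> 2 \<le> f w"
  using assms unfolding rdrd_function_def by blast

lemma S_rds:
  assumes "rdrd_function V E f"
  shows "restrained_dominating_set V E {v\<in>V. 1 \<le> f v}"
proof -
  have "(\<exists>u\<in>{v\<in>V. 1 \<le> f v}. E v u) \<and> (\<exists>u\<in>V - {v\<in>V. 1 \<le> f v}. E v u)"
    if "v \<in> V - {v\<in>V. 1 \<le> f v}" for v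
  proof -
    from that have v: "v\<in>V" "f v = 0" by auto
    from zero_nb0[OF assms v] zero_nb2[OF assms v]
    show ?thesis by force
  qed
  then show ?thesis unfolding restrained_dominating_set_def by blast
qed

lemma D_ds:
  assumes "rdrd_function V E f"
  shows "dominating_set V E {v\<in>V. 2 \<le> f v}"
  unfolding dominating_set_def
proof (intro conjI ballI)
  show "{v\<in>V. 2 \<le> f v} \<subseteq> V" by auto
next
  fix v assume "v \<in> V - {v\<in>V. 2 \<le> f v}"
  then have v: "v\<in>V" "f v = 0 \<or> f v = 1" by auto
  then have "\<exists>w\<in>V. E v w \<and> 2 \<le> f w" using zero_nb2[OF assms] one_nb[OF assms] by blast
  then show "\<exists>u\<in>{v\<in>V. 2 \<le> f v}. E v u" by auto
qed

lemma card_if: "finite V \<Longrightarrow> (\<Sum>v\<in>V. (if P v then 1 else 0::nat)) = card {v\<in>V. P v}"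
  by (simp add: sum.If_cases Int_def)

lemma card_sum:
  fixes f :: "'a \<Rightarrow> nat"
  assumes "finite V"
  shows "card {v\<in>V. 1 \<le> f v} + card {v\<in>V. 2 \<le> f v}
    = (\<Sum>v\<in>V. (if 1 \<le> f v then 1 else 0) + (if 2 \<le> f v then 1 else (0::nat)))"
  unfolding sum.distrib card_if[OF assms] ..

lemma base_sum:
  assumes "finite V"
  shows "card {v\<in>V. 1 \<le> f v} + card {v\<in>V. 2 \<le> f v} \<le> sum f V"
  unfolding card_sum[OF assms] by (rule sum_mono) auto

lemma lower:
  assumes sg: "simple_graph V E" and f: "rdrd_function V E f"
  shows "domination_number V E + restrained_domination_number V E \<le> sum f V"
  using dom_le[OF D_ds[OF f]] rdom_le[OF S_rds[OF f]] base_sum[OF sg_fin[OF sg], of f] by linarith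

lemma closed_all:
  assumes conn: "connected_graph V E" and c: "c \<in> C" "c \<in> V"
    and cl: "\<And>x y. x \<in> C \<Longrightarrow> E x y \<Longrightarrow> y \<in> C"
  shows "V \<subseteq> C"
proof
  fix v assume v: "v \<in> V"
  from conn c v obtain p where p: "is_walk E p" "hd p = c" "last p = v"
    unfolding connected_graph_def by blast
  have ne: "p \<noteq> []" using p unfolding is_walk_def by blast
  have "\<forall>i. i < length p \<longrightarrow> p ! i \<in> C"
  proof (intro allI)
    fix i show "i < length p \<longrightarrow> p ! i \<in> C"
    proof (induction i)
      case 0 then show ?case using p ne c by (simp add: hd_conv_nth[symmetric])
    next
      case (Suc i)
      show ?case
      proof
        assume "Suc i < length p"
        then have "p ! i \<in> C" "E (p ! i) (p ! Suc i)" using Suc p unfolding is_walk_def by auto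
        then show "p ! Suc i \<in> C" using cl by blast
      qed
    qed
  qed
  then show "v \<in> C" using p ne by (metis last_conv_nth diff_less length_greater_0_conv zero_less_one)
qed

lemma star_from_center:
  assumes sg: "simple_graph V E" and conn: "connected_graph V E"
    and bV: "b \<in> V" and leaf: "\<And>x y. E b x \<Longrightarrow> E x y \<Longrightarrow> y = b"
  shows "is_star V E"
proof -
  have "V \<subseteq> insert b {x. E b x}"
    by (rule closed_all[OF conn, of b]) (use bV leaf in auto)
  then have all: "\<forall>v\<in>V. v \<noteq> b \<longrightarrow> E b v" by auto
  have "\<forall>u v. E u v \<longrightarrow> u = b \<or> v = b"
  proof (intro allI impI)
    fix u v assume uv: "E u v"
    show "u = b \<or> v = b"
    proof (cases "u = b")
      case False
      then have "E b u" using all sg_V1[OF sg uv] by blast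
      then show ?thesis using leaf uv by blast
    qed simp
  qed
  then show ?thesis unfolding is_star_def using bV all by blast
qed

lemma path4:
  assumes sg: "simple_graph V E" and conn: "connected_graph V E" and ns: "\<not> is_star V E"
  shows "\<exists>a b c d. E a b \<and> E b c \<and> E c d \<and> a \<noteq> c \<and> b \<noteq> d"
proof (rule ccontr)
  assume H: "\<not> ?thesis"
  have key: "(\<forall>y. E x y \<longrightarrow> y = m) \<or> (\<forall>z. E m z \<longrightarrow> z = x)" if "E m x" for m x
  proof (rule ccontr)
    assume "\<not> ?thesis"
    then obtain y z where "E x y" "y \<noteq> m" "E m z" "z \<noteq> x" by blast
    then show False using H that sg_sym[OF sg] by blast
  qed
  obtain v0 where v0: "v0 \<in> V" using conn unfolding connected_graph_def by blast
  show False
  proof (cases "\<exists>x y. E x y")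
    case False
    have "V \<subseteq> {v0}" by (rule closed_all[OF conn, of v0]) (use False v0 in auto)
    then have "is_star V E" unfolding is_star_def using v0 False by blast
    then show False using ns by blast
  next
    case True
    then obtain b c where bc: "E b c" by blast
    have gen: "is_star V E" if bc': "E b' c'" and nc: "\<forall>y. E c' y \<longrightarrow> y = b'" for b' c'
    proof (rule star_from_center[OF sg conn sg_V1[OF sg bc']])
      fix x y assume bx: "E b' x" and xy: "E x y"
      from key[OF bx] show "y = b'"
      proof
        assume "\<forall>y. E x y \<longrightarrow> y = b'" then show ?thesis using xy by blast
      next
        assume "\<forall>z. E b' z \<longrightarrow> z = x"
        then have "x = c'" using bc' by blast
        then show ?thesis using nc xy by blast
      qed
    qed
    from key[OF bc] show False
    proof
      assume "\<forall>y. E c y \<longrightarrow> y = b" then show False using gen[OF bc] ns by blast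
    next
      assume "\<forall>z. E b z \<longrightarrow> z = c" then show False using gen[OF sg_sym[OF sg bc]] ns by blast
    qed
  qed
qed


lemma S_minus:
  assumes f: "rdrd_function V E f" and sg: "simple_graph V E" and no3: "\<forall>v\<in>V. f v \<noteq> 3"
    and u: "u \<in> V" "f u = 0" "E u a" and fa: "f a = 2" and w: "E a w" "1 \<le> f w"
  shows "restrained_dominating_set V E ({v\<in>V. 1 \<le> f v} - {a})"
proof -
  have "(\<exists>x\<in>{v\<in>V. 1 \<le> f v} - {a}. E v x) \<and> (\<exists>x\<in>V - ({v\<in>V. 1 \<le> f v} - {a}). E v x)"
    if vin: "v \<in> V - ({v\<in>V. 1 \<le> f v} - {a})" for v
  proof (cases "v = a")
    case True
    have "w \<in> V" "w \<noteq> a" using sg_V2[OF sg w(1)] sg_irr[OF sg] w by auto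
    moreover have "E a u" using sg_sym[OF sg u(3)] .
    ultimately show ?thesis using True w u by auto
  next
    case False
    with vin have v: "v \<in> V" "f v = 0" by auto
    from zero_nb0[OF f v] obtain z where z: "z \<in> V" "E v z" "f z = 0" by blast
    have "(\<exists>u1\<in>V. \<exists>u2\<in>V. u1 \<noteq> u2 \<and> E v u1 \<and> E v u2 \<and> f u1 = 2 \<and> f u2 = 2)
         \<or> (\<exists>u\<in>V. E v u \<and> f u = 3)" using f v unfolding rdrd_function_def by blast
    then obtain u1 u2 where "u1\<in>V" "u2\<in>V" "u1 \<noteq> u2" "E v u1" "E v u2" "f u1 = 2" "f u2 = 2"
      using no3 by blast
    then have "\<exists>x\<in>{v\<in>V. 1 \<le> f v} - {a}. E v x" by (cases "u1 = a") auto
    then show ?thesis using z by auto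
  qed
  then show ?thesis unfolding restrained_dominating_set_def by blast
qed

lemma cyc:
  assumes sg: "simple_graph V E" and "E v a" "E v b" "E u a" "E u b"
    and "distinct [v, a, u, b]"
  shows "has_cycle E"
proof -
  have "is_walk E [v, a, u, b]"
    unfolding is_walk_def
  proof (intro conjI allI impI)
    fix i assume "Suc i < length [v, a, u, b]"
    then have "i = 0 \<or> i = 1 \<or> i = 2" by auto
    then show "E ([v, a, u, b] ! i) ([v, a, u, b] ! Suc i)"
      using assms sg_sym[OF sg] by auto
  qed simp
  moreover have "E (last [v, a, u, b]) (hd [v, a, u, b])" using assms sg_sym[OF sg] by simp
  moreover have "length [v, a, u, b] \<ge> 3" by simp
  ultimately show ?thesis unfolding has_cycle_def using assms(6) by blast
qed

lemma strict:
  assumes tree: "is_tree V E" and ns: "\<not> is_star V E" and f: "rdrd_function V E f"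
  shows "domination_number V E + restrained_domination_number V E < sum f V"
proof -
  have sg: "simple_graph V E" and conn: "connected_graph V E" and nc: "\<not> has_cycle E"
    using tree unfolding is_tree_def by auto
  have fin: "finite V" using sg_fin[OF sg] .
  define S where "S = {v\<in>V. 1 \<le> f v}"
  define D where "D = {v\<in>V. 2 \<le> f v}"
  have dD: "domination_number V E \<le> card D" unfolding D_def using dom_le[OF D_ds[OF f]] .
  have rS: "restrained_domination_number V E \<le> card S" unfolding S_def using rdom_le[OF S_rds[OF f]] .
  have base: "card S + card D \<le> sum f V" unfolding S_def D_def using base_sum[OF fin] .
  have finS: "finite S" "finite D" using fin unfolding S_def D_def by auto
  show ?thesis
  proof (cases "\<exists>w\<in>V. f w = 3")
    case True
    then obtain w where w: "w \<in> V" "f w = 3" by blast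
    have "card S + card D < sum f V"
      unfolding S_def D_def card_sum[OF fin]
      apply (rule sum_strict_mono_ex1[OF fin])
       apply force
      using w by (intro bexI[of _ w]) auto
    then show ?thesis using dD rS by linarith
  next
    case False
    then have no3: "\<forall>v\<in>V. f v \<noteq> 3" by blast
    show ?thesis
    proof (cases "\<exists>u\<in>V. f u = 0")
      case False
      then have SV: "S = V" unfolding S_def by auto
      obtain a b c d where p: "E a b" "E b c" "E c d" "a \<noteq> c" "b \<noteq> d"
        using path4[OF sg conn ns] by blast
      have V: "a \<in> V" "b \<in> V" "c \<in> V" "d \<in> V"
        using p sg_V1[OF sg] sg_V2[OF sg] by auto
      have ne: "a \<noteq> b" "b \<noteq> c" "c \<noteq> d" using p sg_irr[OF sg] by auto
      have "restrained_dominating_set V E (V - {b, c})"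
        unfolding restrained_dominating_set_def
        using p V ne sg_sym[OF sg] by auto
      then have "restrained_domination_number V E \<le> card (V - {b, c})" by (rule rdom_le)
      also have "\<dots> = card V - 2" using V ne fin by (simp add: card_Diff_subset)
      finally have r: "restrained_domination_number V E \<le> card V - 2" .
      have "0 < card V" using fin V by (auto simp: card_gt_0_iff)
      moreover have "card S = card V" using SV by simp
      ultimately have "restrained_domination_number V E < card S" using r by linarith
      then show ?thesis using dD base by linarith
    next
      case True
      then obtain u where u: "u \<in> V" "f u = 0" by blast
      have "(\<exists>u1\<in>V. \<exists>u2\<in>V. u1 \<noteq> u2 \<and> E u u1 \<and> E u u2 \<and> f u1 = 2 \<and> f u2 = 2)
         \<or> (\<exists>x\<in>V. E u x \<and> f x = 3)" using f u unfolding rdrd_function_def by blast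
      then obtain a b where ab: "a\<in>V" "b\<in>V" "a \<noteq> b" "E u a" "E u b" "f a = 2" "f b = 2"
        using no3 by blast
      show ?thesis
      proof (cases "\<exists>w. (E a w \<or> E b w) \<and> 1 \<le> f w")
        case True
        then obtain x w where xw: "x = a \<or> x = b" "E x w" "1 \<le> f w" by blast
        have fx: "f x = 2" "E u x" "x \<in> V" using xw ab by auto
        have "restrained_dominating_set V E (S - {x})"
          unfolding S_def by (rule S_minus[OF f sg no3 u fx(2) fx(1) xw(2,3)])
        then have "restrained_domination_number V E \<le> card (S - {x})" by (rule rdom_le)
        also have "\<dots> < card S" using finS fx unfolding S_def by (intro card_Diff1_less) auto
        finally show ?thesis using dD base by linarith
      next
        case False
        then have za: "\<And>w. E a w \<Longrightarrow> f w = 0" and zb: "\<And>w. E b w \<Longrightarrow> f w = 0" by auto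
        define D' where "D' = insert u (D - {a, b})"
        have "dominating_set V E D'"
          unfolding dominating_set_def
        proof (intro conjI ballI)
          show "D' \<subseteq> V" unfolding D'_def D_def using u by auto
        next
          fix v assume vin: "v \<in> V - D'"
          show "\<exists>x\<in>D'. E v x"
          proof (cases "v = a \<or> v = b")
            case True
            then show ?thesis unfolding D'_def using ab sg_sym[OF sg] by auto
          next
            case False
            with vin have v: "v \<in> V" "v \<noteq> u" "f v < 2" unfolding D'_def D_def by auto
            show ?thesis
            proof (cases "f v = 1")
              case True
              from one_nb[OF f v(1) True] obtain w where w: "w \<in> V" "E v w" "2 \<le> f w" by blast
              have "w \<noteq> a" "w \<noteq> b" using za zb w sg_sym[OF sg] True by force+
              then show ?thesis unfolding D'_def D_def using w by auto
            next
              case False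
              with v have v0: "f v = 0" by auto
              have "(\<exists>u1\<in>V. \<exists>u2\<in>V. u1 \<noteq> u2 \<and> E v u1 \<and> E v u2 \<and> f u1 = 2 \<and> f u2 = 2)
                 \<or> (\<exists>x\<in>V. E v x \<and> f x = 3)" using f v(1) v0 unfolding rdrd_function_def by blast
              then obtain u1 u2 where uu: "u1\<in>V" "u2\<in>V" "u1 \<noteq> u2" "E v u1" "E v u2" "f u1 = 2" "f u2 = 2"
                using no3 by blast
              show ?thesis
              proof (cases "u1 \<notin> {a, b} \<or> u2 \<notin> {a, b}")
                case True
                then show ?thesis unfolding D'_def D_def using uu by auto
              next
                case False
                then have "E v a" "E v b" using uu ab by auto
                moreover have "distinct [v, a, u, b]" using v v0 u ab by auto
                ultimately have "has_cycle E" using cyc[OF sg _ _ ab(4,5)] sg_sym[OF sg] by blast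
                then show ?thesis using nc by blast
              qed
            qed
          qed
        qed
        then have "domination_number V E \<le> card D'" by (rule dom_le)
        also have "\<dots> \<le> Suc (card (D - {a, b}))" unfolding D'_def using finS by (simp add: card_insert_le_m1 card_insert_if)
        also have "card (D - {a, b}) = card D - 2"
          using finS ab unfolding D_def by (subst card_Diff_subset) auto
        also have "Suc (card D - 2) < card D"
        proof -
          have "{a, b} \<subseteq> D" using ab unfolding D_def by auto
          then have "card {a, b} \<le> card D" using finS by (intro card_mono) auto
          then show ?thesis using ab by auto
        qed
        finally show ?thesis using rS base by linarith
      qed
    qed
  qed
qed


lemma rdrd_attained:
  "\<exists>f. rdrd_function V E f \<and> sum f V = rdrd_number V E"
proof -
  have "rdrd_function V E (\<lambda>_. 2)" unfolding rdrd_function_def by simp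
  then have "\<exists>k f. rdrd_function V E f \<and> sum f V = k" by blast
  then have "\<exists>f. rdrd_function V E f \<and> sum f V = (LEAST k. \<exists>f. rdrd_function V E f \<and> sum f V = k)"
    by (rule LeastI_ex)
  then show ?thesis unfolding rdrd_number_def .
qed

lemma rdrd_le: "rdrd_function V E f \<Longrightarrow> rdrd_number V E \<le> sum f V"
  unfolding rdrd_number_def by (rule Least_le) blast

lemma star_eq:
  assumes sg: "simple_graph V E" and st: "is_star V E"
  shows "rdrd_number V E = domination_number V E + restrained_domination_number V E"
proof -
  from st obtain c where c: "c \<in> V" "\<forall>v\<in>V. v \<noteq> c \<longrightarrow> E c v" "\<forall>u v. E u v \<longrightarrow> u = c \<or> v = c"
    unfolding is_star_def by blast
  have fin: "finite V" using sg_fin[OF sg] .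
  define g where "g = (\<lambda>v. if v = c then 2 else (1::nat))"
  have g: "rdrd_function V E g"
    unfolding rdrd_function_def g_def using c sg_sym[OF sg] by auto
  have "sum g V = (\<Sum>v\<in>V. 1 + (if v = c then 1 else 0))"
    unfolding g_def by (rule sum.cong) auto
  also have "\<dots> = card V + 1" unfolding sum.distrib using fin c by simp
  finally have sg_eq: "sum g V = card V + 1" .
  have "dominating_set V E V" unfolding dominating_set_def by simp
  then have "\<exists>k S. dominating_set V E S \<and> card S = k" by blast
  then have "\<exists>S. dominating_set V E S \<and> card S = (LEAST k. \<exists>S. dominating_set V E S \<and> card S = k)"
    by (rule LeastI_ex)
  then obtain D where D: "dominating_set V E D" "card D = domination_number V E"
    unfolding domination_number_def by blast
  have "D \<noteq> {}" using D(1) c unfolding dominating_set_def by auto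
  moreover have "finite D" using D(1) fin unfolding dominating_set_def by (auto intro: finite_subset)
  ultimately have "card D > 0" by (simp add: card_gt_0_iff)
  then have d1: "1 \<le> domination_number V E" using D(2) by simp
  have "restrained_dominating_set V E V" unfolding restrained_dominating_set_def by simp
  then have "\<exists>k S. restrained_dominating_set V E S \<and> card S = k" by blast
  then have "\<exists>S. restrained_dominating_set V E S \<and> card S = (LEAST k. \<exists>S. restrained_dominating_set V E S \<and> card S = k)"
    by (rule LeastI_ex)
  then obtain R where R: "restrained_dominating_set V E R" "card R = restrained_domination_number V E"
    unfolding restrained_domination_number_def by blast
  have "R = V"
  proof (rule ccontr)
    assume "R \<noteq> V"
    then obtain v where v: "v \<in> V" "v \<notin> R" using R(1) unfolding restrained_dominating_set_def by blast
    have nb: "\<exists>x\<in>R. E w x" "\<exists>y\<in>V - R. E w y" if "w \<in> V" "w \<notin> R" for w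
      using R(1) that unfolding restrained_dominating_set_def by blast+
    obtain x y where xy: "x \<in> R" "E v x" "y \<in> V" "y \<notin> R" "E v y"
      using nb[OF v] by blast
    show False
    proof (cases "v = c")
      case False
      then have "x = c" "y = c" using c(3) xy by blast+
      then show False using xy by simp
    next
      case True
      have "y \<noteq> c" using xy sg_irr[OF sg] True by blast
      obtain z where z: "z \<in> R" "E y z" using nb[OF xy(3,4)] by blast
      then have "z = c" using c(3) \<open>y \<noteq> c\<close> by blast
      then show False using z True v by simp
    qed
  qed
  then have "restrained_domination_number V E = card V" using R(2) by simp
  then have "rdrd_number V E \<le> domination_number V E + restrained_domination_number V E"
    using rdrd_le[OF g] sg_eq d1 by linarith
  moreover obtain f where "rdrd_function V E f" "sum f V = rdrd_number V E" using rdrd_attained by blast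
  then have "domination_number V E + restrained_domination_number V E \<le> rdrd_number V E"
    using lower[OF sg, of f] by simp
  ultimately show ?thesis by linarith
qed

theorem proposition2p10:
  fixes V :: "'a set" and E :: "'a \<Rightarrow> 'a \<Rightarrow> bool"
  assumes "is_tree V E"
  shows "rdrd_number V E = domination_number V E + restrained_domination_number V E
         \<longleftrightarrow> is_star V E"
proof
  assume eq: "rdrd_number V E = domination_number V E + restrained_domination_number V E"
  show "is_star V E"
  proof (rule ccontr)
    assume "\<not> is_star V E"
    moreover obtain f where "rdrd_function V E f" "sum f V = rdrd_number V E" using rdrd_attained by blast
    ultimately show False using strict[OF assms] eq by fastforce
  qed
next
  assume "is_star V E"
  then show "rdrd_number V E = domination_number V E + restrained_domination_number V E"
    using star_eq assms unfolding is_tree_def by blast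
qed

end
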